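(* Let $\mathbf C$ be the covariance matrix of a Matérn Gaussian process with parameters $(\sigma_0^2,\phi_0,\nu_0)$ evaluated at locations $s_1,\dots,s_n\in\mathbb R^2$ satisfying $\|s_i-s_j\|\ge h$ for all $i\ne j$, for a fixed $h>0$, and let $\tau_0^2\ge0$. Then the maximum eigenvalue of $\boldsymbol\Sigma=\mathbf C+\tau_0^2\mathbf I$ has an upper bound $\Psi_{high}<\infty$ that is uniform in $n$.
   Context: Matérn covariance: $\mathbf C_{ij}=C(\|s_i-s_j\|)$ with $C(d)=\frac{2^{1-\nu_0}\sigma_0^2(\sqrt2\phi_0d)^{\nu_0}}{\Gamma(\nu_0)}\mathcal K_{\nu_0}(\sqrt2\phi_0d)$ (and $C(0)=\sigma_0^2$), $\mathcal K_\nu$ the modified Bessel function of the second kind. *)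

theory Defs
  imports "HOL-Analysis.Analysis" "Jordan_Normal_Form.Char_Poly"
begin

text \<open>Modified Bessel function of the second kind, for x > 0, via the standard
  integral representation K_nu(x) = integral over [0,inf) of exp(-x cosh t) cosh(nu t) dt.\<close>
definition besselK :: "real \<Rightarrow> real \<Rightarrow> real" where
  "besselK \<nu> x = integral {0..} (\<lambda>t. exp (- x * cosh t) * cosh (\<nu> * t))"

definition matern :: "real \<Rightarrow> real \<Rightarrow> real \<Rightarrow> real \<Rightarrow> real" where
  "matern \<sigma>2 \<phi> \<nu> d =
     (if d = 0 then \<sigma>2
      else 2 powr (1 - \<nu>) * \<sigma>2 * (sqrt 2 * \<phi> * d) powr \<nu> / Gamma \<nu>
           * besselK \<nu> (sqrt 2 * \<phi> * d))"

definition matern_Sigma ::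
  "real \<Rightarrow> real \<Rightarrow> real \<Rightarrow> real \<Rightarrow> nat \<Rightarrow> (nat \<Rightarrow> real^2) \<Rightarrow> real mat" where
  "matern_Sigma \<sigma>2 \<phi> \<nu> \<tau>2 n s =
     mat n n (\<lambda>(i, j). matern \<sigma>2 \<phi> \<nu> (norm (s i - s j)) + (if i = j then \<tau>2 else 0))"

end

theory Submission
  imports Defs
begin


lemma cosh_ge_sq: fixes t :: real assumes "t \<ge> 0" shows "cosh t \<ge> t^2/8"
proof -
  have e: "exp (t/2) \<ge> t/2" using exp_ge_add_one_self[of "t/2"] by linarith
  have "exp t = exp (t/2)^2" by (simp add: power2_eq_square flip: exp_add)
  also have "\<dots> \<ge> (t/2)^2" using e assms by (intro power_mono) auto
  finally have "exp t \<ge> t^2/4" by (simp add: power_divide)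
  moreover have "cosh t * 2 = exp t + exp (-t)" by (simp add: cosh_def)
  moreover have "exp (-t) > 0" by simp
  ultimately show ?thesis by linarith
qed

lemma cosh_le_exp_abs: fixes y :: real shows "cosh y \<le> exp \<bar>y\<bar>"
proof -
  have "cosh y * 2 = exp y + exp (-y)" by (simp add: cosh_def)
  moreover have "exp y \<le> exp \<bar>y\<bar>" "exp (-y) \<le> exp \<bar>y\<bar>" by auto
  ultimately show ?thesis by linarith
qed

lemma bes_bound:
  fixes x \<nu> t :: real assumes "x > 0" "t \<ge> 0"
  shows "\<bar>exp (- x * cosh t) * cosh (\<nu> * t)\<bar> \<le> exp (2*(\<bar>\<nu>\<bar>+1)^2/x) * exp (-1 * t)"
proof -
  let ?a = "\<bar>\<nu>\<bar>+1"
  have c: "cosh (\<nu>*t) \<le> exp (\<bar>\<nu>\<bar>*t)" using cosh_le_exp_abs[of "\<nu>*t"] assms by (simp add: abs_mult)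
  have cp: "cosh (\<nu>*t) > 0" by simp
  have q: "x*t^2/8 - ?a*t + 2*?a^2/x \<ge> 0"
  proof -
    have "x*t^2/8 - ?a*t + 2*?a^2/x = (x/8) * (t - 4*?a/x)^2"
      using assms by (simp add: field_simps power2_eq_square)
    also have "\<dots> \<ge> 0" using assms by simp
    finally show ?thesis .
  qed
  have k: "x * cosh t \<ge> x * (t^2/8)" using cosh_ge_sq[OF assms(2)] assms by simp
  have "\<bar>exp (- x * cosh t) * cosh (\<nu> * t)\<bar> = exp (- x * cosh t) * cosh (\<nu> * t)"
    using cp by simp
  also have "\<dots> \<le> exp (- x * cosh t) * exp (\<bar>\<nu>\<bar>*t)" using c by simp
  also have "\<dots> = exp (- x * cosh t + \<bar>\<nu>\<bar>*t)" by (rule exp_add[symmetric])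
  also have "\<dots> \<le> exp (2*?a^2/x + (-1*t))" using q k by (simp add: algebra_simps)
  also have "\<dots> = exp (2*?a^2/x) * exp (-1 * t)" by (rule exp_add)
  finally show ?thesis .
qed

lemma bes_integrable:
  fixes x \<nu> :: real assumes "x > 0"
  shows "(\<lambda>t. exp (- x * cosh t) * cosh (\<nu> * t)) integrable_on {0..}"
proof (rule measurable_bounded_by_integrable_imp_integrable_real)
  show "(\<lambda>t. exp (- x * cosh t) * cosh (\<nu> * t)) \<in> borel_measurable (lebesgue_on {0..})"
    by (intro continuous_imp_measurable_on_sets_lebesgue continuous_intros) auto
  show "(\<lambda>t. exp (2*(\<bar>\<nu>\<bar>+1)^2/x) * exp (-1 * t)) integrable_on {0..}"
    using integrable_on_exp_minus_to_infinity[of 1 0] by (intro integrable_on_mult_right) auto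
  show "\<bar>exp (- x * cosh t) * cosh (\<nu> * t)\<bar> \<le> exp (2*(\<bar>\<nu>\<bar>+1)^2/x) * exp (-1 * t)" if "t \<in> {0..}" for t
    using bes_bound[OF assms] that by auto
qed auto

lemma besselK_nonneg: assumes "x > 0" shows "besselK \<nu> x \<ge> 0"
  unfolding besselK_def
  by (rule integral_nonneg[OF bes_integrable[OF assms]]) auto

lemma besselK_decay:
  assumes "x0 > 0" "x \<ge> x0"
  shows "besselK \<nu> x \<le> exp (x0 - x) * besselK \<nu> x0"
proof -
  have "besselK \<nu> x \<le> integral {0..} (\<lambda>t. exp (x0 - x) * (exp (- x0 * cosh t) * cosh (\<nu> * t)))"
    unfolding besselK_def
  proof (rule integral_le)
    show "(\<lambda>t. exp (- x * cosh t) * cosh (\<nu> * t)) integrable_on {0..}"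
      using assms by (intro bes_integrable) auto
    show "(\<lambda>t. exp (x0 - x) * (exp (- x0 * cosh t) * cosh (\<nu> * t))) integrable_on {0..}"
      using assms by (intro integrable_on_mult_right bes_integrable) auto
    fix t :: real
    have ch: "cosh t \<ge> 1" by (rule cosh_real_ge_1)
    have "(x - x0) * cosh t \<ge> (x - x0) * 1" using assms ch by (intro mult_left_mono) auto
    then have "- x * cosh t \<le> (x0 - x) + (- x0 * cosh t)" by (simp add: algebra_simps)
    then have "exp (- x * cosh t) \<le> exp (x0 - x) * exp (- x0 * cosh t)" by (simp flip: exp_add)
    then show "exp (- x * cosh t) * cosh (\<nu> * t) \<le> exp (x0 - x) * (exp (- x0 * cosh t) * cosh (\<nu> * t))"
      by (simp add: mult_right_mono mult.assoc[symmetric])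
  qed
  also have "\<dots> = exp (x0 - x) * besselK \<nu> x0" unfolding besselK_def by simp
  finally show ?thesis .
qed



lemma geo1d:
  fixes \<beta> :: real assumes "\<beta> > 0"
  shows "(\<Sum>k\<in>{-int N..int N}. exp (- \<beta> * \<bar>real_of_int k\<bar>))
     = (1 + exp (-\<beta>) - 2 * exp (-\<beta>) ^ (N+1)) / (1 - exp (-\<beta>))"
proof (induction N)
  case 0
  have "exp (-\<beta>) < 1" using assms by simp
  then show ?case by simp
next
  case (Suc N)
  let ?q = "exp (-\<beta>)"
  have q1: "?q < 1" using assms by simp
  have e: "{-int (Suc N)..int (Suc N)} = insert (-int (Suc N)) (insert (int (Suc N)) {-int N..int N})"
    by auto
  have ex: "exp (- \<beta> * real (Suc N)) = ?q ^ Suc N"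
    by (metis exp_of_nat_mult mult.commute mult_minus_left)
  have "(\<Sum>k\<in>{-int (Suc N)..int (Suc N)}. exp (- \<beta> * \<bar>real_of_int k\<bar>))
     = 2 * ?q ^ Suc N + (\<Sum>k\<in>{-int N..int N}. exp (- \<beta> * \<bar>real_of_int k\<bar>))"
    unfolding e using ex by (simp add: add.commute)
  also have "\<dots> = 2 * ?q ^ Suc N + (1 + ?q - 2 * ?q ^ (N+1)) / (1 - ?q)" using Suc by simp
  also have "\<dots> = (1 + ?q - 2 * ?q ^ (Suc N + 1)) / (1 - ?q)"
    using q1 by (simp add: field_simps)
  finally show ?case .
qed

lemma geo1d_le:
  fixes \<beta> :: real assumes "\<beta> > 0"
  shows "(\<Sum>k\<in>{-int N..int N}. exp (- \<beta> * \<bar>real_of_int k\<bar>)) \<le> (1 + exp (-\<beta>)) / (1 - exp (-\<beta>))"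
proof -
  have q1: "exp (-\<beta>) < 1" using assms by simp
  have "0 \<le> exp (-\<beta>) ^ (N+1)" by simp
  then show ?thesis unfolding geo1d[OF assms] using q1 by (simp add: divide_right_mono)
qed

lemma floor_diff_bound:
  fixes u v c :: real assumes "c > 0"
  shows "c * \<bar>real_of_int (\<lfloor>u/c\<rfloor> - \<lfloor>v/c\<rfloor>)\<bar> \<le> \<bar>u - v\<bar> + c"
proof -
  have a: "real_of_int \<lfloor>u/c\<rfloor> \<le> u/c" "u/c < real_of_int \<lfloor>u/c\<rfloor> + 1" by linarith+
  have b: "real_of_int \<lfloor>v/c\<rfloor> \<le> v/c" "v/c < real_of_int \<lfloor>v/c\<rfloor> + 1" by linarith+
  have "\<bar>real_of_int (\<lfloor>u/c\<rfloor> - \<lfloor>v/c\<rfloor>)\<bar> \<le> \<bar>u/c - v/c\<bar> + 1" using a b by linarith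
  also have "\<bar>u/c - v/c\<bar> = \<bar>u - v\<bar> / c" using assms by (simp add: diff_divide_distrib[symmetric])
  finally have "c * \<bar>real_of_int (\<lfloor>u/c\<rfloor> - \<lfloor>v/c\<rfloor>)\<bar> \<le> c * (\<bar>u - v\<bar> / c + 1)"
    using assms by (intro mult_left_mono) auto
  also have "\<dots> = \<bar>u - v\<bar> + c" using assms by (simp add: field_simps)
  finally show ?thesis .
qed

lemma packing:
  fixes s :: "nat \<Rightarrow> real^2" and h b :: real
  assumes h: "h > 0" and b: "b > 0" and i: "i < n"
    and sep: "\<forall>i<n. \<forall>j<n. i \<noteq> j \<longrightarrow> norm (s i - s j) \<ge> h"
  shows "(\<Sum>j\<in>{j. j<n \<and> j\<noteq>i}. exp (- b * norm (s i - s j)))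
       \<le> exp (b*(h/2)) * ((1 + exp (-(b*(h/2)/2))) / (1 - exp (-(b*(h/2)/2))))^2"
proof -
  define c where "c = h/2"
  have c: "c > 0" using h by (simp add: c_def)
  define \<beta> where "\<beta> = b*c/2"
  have \<beta>: "\<beta> > 0" using b c by (simp add: \<beta>_def)
  define J where "J = {j. j<n \<and> j\<noteq>i}"
  have fJ: "finite J" unfolding J_def by simp
  define w where "w j = (\<lfloor>s j $ 1 / c\<rfloor> - \<lfloor>s i $ 1 / c\<rfloor>, \<lfloor>s j $ 2 / c\<rfloor> - \<lfloor>s i $ 2 / c\<rfloor>)" for j
  define F where "F k = exp (- \<beta> * \<bar>real_of_int k\<bar>)" for k
  have Fnn: "F k \<ge> 0" for k unfolding F_def by simp
  have inj: "inj_on w J"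
  proof (rule inj_onI)
    fix j j' assume jJ: "j \<in> J" "j' \<in> J" and eq: "w j = w j'"
    show "j = j'"
    proof (rule ccontr)
      assume ne: "j \<noteq> j'"
      have e1: "\<lfloor>s j $ 1 / c\<rfloor> = \<lfloor>s j' $ 1 / c\<rfloor>" and e2: "\<lfloor>s j $ 2 / c\<rfloor> = \<lfloor>s j' $ 2 / c\<rfloor>"
        using eq unfolding w_def by auto
      have d1: "\<bar>(s j - s j') $ 1\<bar> < c"
      proof -
        have "real_of_int \<lfloor>s j $ 1 / c\<rfloor> \<le> s j $ 1 / c" "s j $ 1 / c < real_of_int \<lfloor>s j $ 1 / c\<rfloor> + 1"
             "real_of_int \<lfloor>s j' $ 1 / c\<rfloor> \<le> s j' $ 1 / c" "s j' $ 1 / c < real_of_int \<lfloor>s j' $ 1 / c\<rfloor> + 1"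
          by linarith+
        then have "\<bar>s j $ 1 / c - s j' $ 1 / c\<bar> < 1" using e1 by linarith
        then have "\<bar>s j $ 1 - s j' $ 1\<bar> / c < 1" using c by (simp add: diff_divide_distrib[symmetric])
        then show ?thesis using c by (simp add: divide_less_eq)
      qed
      have d2: "\<bar>(s j - s j') $ 2\<bar> < c"
      proof -
        have "real_of_int \<lfloor>s j $ 2 / c\<rfloor> \<le> s j $ 2 / c" "s j $ 2 / c < real_of_int \<lfloor>s j $ 2 / c\<rfloor> + 1"
             "real_of_int \<lfloor>s j' $ 2 / c\<rfloor> \<le> s j' $ 2 / c" "s j' $ 2 / c < real_of_int \<lfloor>s j' $ 2 / c\<rfloor> + 1"
          by linarith+
        then have "\<bar>s j $ 2 / c - s j' $ 2 / c\<bar> < 1" using e2 by linarith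
        then have "\<bar>s j $ 2 - s j' $ 2\<bar> / c < 1" using c by (simp add: diff_divide_distrib[symmetric])
        then show ?thesis using c by (simp add: divide_less_eq)
      qed
      have "norm (s j - s j') \<le> (\<Sum>k\<in>UNIV. \<bar>(s j - s j') $ k\<bar>)" by (rule norm_le_l1_cart)
      also have "\<dots> = \<bar>(s j - s j') $ 1\<bar> + \<bar>(s j - s j') $ 2\<bar>" by (rule sum_2)
      finally have "norm (s j - s j') < h" using d1 d2 unfolding c_def by linarith
      moreover have "norm (s j - s j') \<ge> h" using sep jJ ne unfolding J_def by auto
      ultimately show False by linarith
    qed
  qed
  have pt: "exp (- b * norm (s i - s j)) \<le> exp (b*c) * (F (fst (w j)) * F (snd (w j)))" for j
  proof -
    have k1: "c * \<bar>real_of_int (fst (w j))\<bar> \<le> norm (s i - s j) + c"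
    proof -
      have "c * \<bar>real_of_int (fst (w j))\<bar> \<le> \<bar>s j $ 1 - s i $ 1\<bar> + c"
        unfolding w_def using floor_diff_bound[OF c] by simp
      also have "\<bar>s j $ 1 - s i $ 1\<bar> = \<bar>(s i - s j) $ 1\<bar>" by simp
      also have "\<dots> \<le> norm (s i - s j)" by (rule component_le_norm_cart)
      finally show ?thesis by simp
    qed
    have k2: "c * \<bar>real_of_int (snd (w j))\<bar> \<le> norm (s i - s j) + c"
    proof -
      have "c * \<bar>real_of_int (snd (w j))\<bar> \<le> \<bar>s j $ 2 - s i $ 2\<bar> + c"
        unfolding w_def using floor_diff_bound[OF c] by simp
      also have "\<bar>s j $ 2 - s i $ 2\<bar> = \<bar>(s i - s j) $ 2\<bar>" by simp
      also have "\<dots> \<le> norm (s i - s j)" by (rule component_le_norm_cart)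
      finally show ?thesis by simp
    qed
    have "b * (c * \<bar>real_of_int (fst (w j))\<bar> + c * \<bar>real_of_int (snd (w j))\<bar>) \<le> b * (2 * norm (s i - s j) + 2*c)"
      using k1 k2 b by (intro mult_left_mono) auto
    then have "- b * norm (s i - s j) \<le> b*c + (- \<beta> * \<bar>real_of_int (fst (w j))\<bar>) + (- \<beta> * \<bar>real_of_int (snd (w j))\<bar>)"
      unfolding \<beta>_def by (simp add: algebra_simps)
    then have "exp (- b * norm (s i - s j)) \<le> exp (b*c + (- \<beta> * \<bar>real_of_int (fst (w j))\<bar>) + (- \<beta> * \<bar>real_of_int (snd (w j))\<bar>))"
      by simp
    also have "\<dots> = exp (b*c) * (F (fst (w j)) * F (snd (w j)))"
      unfolding F_def mult_exp_exp by (simp add: algebra_simps)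
    finally show ?thesis .
  qed
  define N where "N = nat (\<Sum>j\<in>J. \<bar>fst (w j)\<bar> + \<bar>snd (w j)\<bar>)"
  have sub: "w ` J \<subseteq> {-int N..int N} \<times> {-int N..int N}"
  proof
    fix p assume "p \<in> w ` J"
    then obtain j where j: "j \<in> J" "p = w j" by auto
    have "\<bar>fst (w j)\<bar> + \<bar>snd (w j)\<bar> \<le> (\<Sum>j\<in>J. \<bar>fst (w j)\<bar> + \<bar>snd (w j)\<bar>)"
      by (rule member_le_sum[OF j(1)]) (auto simp: fJ)
    then show "p \<in> {-int N..int N} \<times> {-int N..int N}" using j unfolding N_def
      by (cases "w j") (auto simp: mem_Times_iff)
  qed
  have "(\<Sum>j\<in>J. exp (- b * norm (s i - s j))) \<le> (\<Sum>j\<in>J. exp (b*c) * (F (fst (w j)) * F (snd (w j))))"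
    by (rule sum_mono) (rule pt)
  also have "\<dots> = exp (b*c) * (\<Sum>j\<in>J. (\<lambda>p. F (fst p) * F (snd p)) (w j))"
    by (simp add: sum_distrib_left)
  also have "(\<Sum>j\<in>J. (\<lambda>p. F (fst p) * F (snd p)) (w j)) = (\<Sum>p\<in>w ` J. F (fst p) * F (snd p))"
    by (rule sum.reindex[OF inj, symmetric, unfolded comp_def])
  also have "\<dots> \<le> (\<Sum>p\<in>{-int N..int N} \<times> {-int N..int N}. F (fst p) * F (snd p))"
    by (rule sum_mono2[OF _ sub]) (auto intro: mult_nonneg_nonneg Fnn)
  also have "\<dots> = (\<Sum>k\<in>{-int N..int N}. F k) * (\<Sum>l\<in>{-int N..int N}. F l)"
    by (simp add: sum_product sum.cartesian_product case_prod_beta')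
  also have "\<dots> \<le> ((1 + exp (-\<beta>)) / (1 - exp (-\<beta>))) * ((1 + exp (-\<beta>)) / (1 - exp (-\<beta>)))"
    using geo1d_le[OF \<beta>, of N] \<beta> unfolding F_def[abs_def]
    by (intro mult_mono) (auto intro: sum_nonneg divide_nonneg_pos)
  finally have "(\<Sum>j\<in>J. exp (- b * norm (s i - s j))) \<le> exp (b*c) * (((1 + exp (-\<beta>)) / (1 - exp (-\<beta>)))^2)"
    by (simp add: power2_eq_square mult_left_mono)
  then show ?thesis unfolding J_def \<beta>_def c_def .
qed



lemma powr_exp_bound:
  fixes x \<nu> :: real assumes "x > 0" "\<nu> > 0"
  shows "x powr \<nu> \<le> (2*\<nu>) powr \<nu> * exp (x/2)"
proof -
  have "ln (x/(2*\<nu>)) \<le> x/(2*\<nu>) - 1" using assms by (intro ln_le_minus_one) auto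
  moreover have "ln (x/(2*\<nu>)) = ln x - ln (2*\<nu>)" using assms by (simp add: ln_div)
  ultimately have "\<nu> * (ln x - ln (2*\<nu>)) \<le> \<nu> * (x/(2*\<nu>) - 1)"
    using assms by (intro mult_left_mono) auto
  also have "\<dots> = x/2 - \<nu>" using assms by (simp add: field_simps)
  finally have "\<nu> * ln x \<le> \<nu> * ln (2*\<nu>) + x/2" using assms by (simp add: algebra_simps)
  then have "exp (\<nu> * ln x) \<le> exp (\<nu> * ln (2*\<nu>) + x/2)" by simp
  then show ?thesis using assms by (simp add: powr_def exp_add)
qed

lemma matern_bound:
  fixes \<sigma>2 \<phi> \<nu> h d :: real
  assumes "\<sigma>2 > 0" "\<phi> > 0" "\<nu> > 0" "h > 0" "d \<ge> h"
  shows "0 \<le> matern \<sigma>2 \<phi> \<nu> d \<and>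
    matern \<sigma>2 \<phi> \<nu> d \<le> (2 powr (1 - \<nu>) * \<sigma>2 / Gamma \<nu> * besselK \<nu> (sqrt 2 * \<phi> * h)
        * exp (sqrt 2 * \<phi> * h) * (2*\<nu>) powr \<nu>) * exp (- (sqrt 2 * \<phi> / 2) * d)"
proof -
  define x where "x = sqrt 2 * \<phi> * d"
  define x0 where "x0 = sqrt 2 * \<phi> * h"
  define P where "P = 2 powr (1 - \<nu>) * \<sigma>2 / Gamma \<nu>"
  define K0 where "K0 = besselK \<nu> x0"
  have d0: "d > 0" "d \<noteq> 0" using assms by auto
  have x0: "x0 > 0" unfolding x0_def using assms by simp
  have xx0: "x \<ge> x0" unfolding x_def x0_def using assms by (intro mult_left_mono) auto
  have x: "x > 0" using x0 xx0 by linarith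
  have G: "Gamma \<nu> > 0" using assms by (simp add: Gamma_real_pos)
  have P: "P > 0" unfolding P_def using assms G by simp
  have K0: "K0 \<ge> 0" unfolding K0_def using besselK_nonneg[OF x0] .
  have Kx: "besselK \<nu> x \<ge> 0" using besselK_nonneg[OF x] .
  have eq: "matern \<sigma>2 \<phi> \<nu> d = P * (x powr \<nu> * besselK \<nu> x)"
    unfolding matern_def P_def x_def using d0 G by (simp add: field_simps)
  have "x powr \<nu> * besselK \<nu> x \<le> ((2*\<nu>) powr \<nu> * exp (x/2)) * (exp (x0 - x) * K0)"
    using powr_exp_bound[OF x assms(3)] besselK_decay[OF x0 xx0, of \<nu>] Kx
    unfolding K0_def by (intro mult_mono) auto
  also have "\<dots> = (K0 * exp x0 * (2*\<nu>) powr \<nu>) * exp (- x/2)"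
    by (simp add: exp_diff exp_minus field_simps mult_exp_exp)
  finally have b: "x powr \<nu> * besselK \<nu> x \<le> (K0 * exp x0 * (2*\<nu>) powr \<nu>) * exp (- x/2)" .
  have "matern \<sigma>2 \<phi> \<nu> d \<le> P * ((K0 * exp x0 * (2*\<nu>) powr \<nu>) * exp (- x/2))"
    unfolding eq using b P by (intro mult_left_mono) auto
  also have "\<dots> = (P * K0 * exp x0 * (2*\<nu>) powr \<nu>) * exp (- (sqrt 2 * \<phi> / 2) * d)"
    unfolding x_def by (simp add: algebra_simps)
  finally show ?thesis unfolding P_def K0_def x0_def using eq P Kx x by simp
qed



lemma eig_rowsum:
  fixes A :: "real mat"
  assumes A: "A \<in> carrier_mat n n" and ev: "eigenvalue A k"
    and R: "\<And>i. i < n \<Longrightarrow> (\<Sum>j<n. \<bar>A $$ (i,j)\<bar>) \<le> R"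
  shows "k \<le> R"
proof -
  obtain v where v: "v \<in> carrier_vec n" "v \<noteq> 0\<^sub>v n" "A *\<^sub>v v = k \<cdot>\<^sub>v v"
    using ev A unfolding eigenvalue_def eigenvector_def by auto
  have dv: "dim_vec v = n" using v(1) by simp
  have "\<exists>i<n. v $ i \<noteq> 0"
  proof (rule ccontr)
    assume "\<not> ?thesis"
    then have "v = 0\<^sub>v n" using dv by (intro eq_vecI) auto
    then show False using v(2) by simp
  qed
  then obtain i1 where i1: "i1 < n" "v $ i1 \<noteq> 0" by auto
  define M where "M = Max ((\<lambda>i. \<bar>v $ i\<bar>) ` {..<n})"
  have "M \<in> (\<lambda>i. \<bar>v $ i\<bar>) ` {..<n}" unfolding M_def using i1 by (intro Max_in) auto
  then obtain i0 where i0: "i0 < n" "M = \<bar>v $ i0\<bar>" by auto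
  have Mge: "\<bar>v $ i\<bar> \<le> M" if "i < n" for i unfolding M_def using that by (intro Max_ge) auto
  have Mpos: "M > 0" using Mge[OF i1(1)] i1(2) by linarith
  have "k * v $ i0 = (A *\<^sub>v v) $ i0" using v(3) i0 dv by simp
  also have "\<dots> = (\<Sum>j<n. A $$ (i0,j) * v $ j)"
    using A i0 dv by (simp add: scalar_prod_def atLeast0LessThan)
  finally have e: "k * v $ i0 = (\<Sum>j<n. A $$ (i0,j) * v $ j)" .
  have "\<bar>k\<bar> * M = \<bar>\<Sum>j<n. A $$ (i0,j) * v $ j\<bar>" using e i0 by (simp flip: abs_mult)
  also have "\<dots> \<le> (\<Sum>j<n. \<bar>A $$ (i0,j)\<bar> * \<bar>v $ j\<bar>)"
    by (rule order_trans[OF sum_abs]) (simp add: abs_mult)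
  also have "\<dots> \<le> (\<Sum>j<n. \<bar>A $$ (i0,j)\<bar> * M)"
    by (intro sum_mono mult_left_mono Mge) auto
  also have "\<dots> = (\<Sum>j<n. \<bar>A $$ (i0,j)\<bar>) * M" by (simp add: sum_distrib_right)
  also have "\<dots> \<le> R * M" using R[OF i0(1)] Mpos by (intro mult_right_mono) auto
  finally have "\<bar>k\<bar> \<le> R" using Mpos by simp
  then show ?thesis by linarith
qed



lemma Max_bad: fixes S :: "real set" assumes "\<not> (finite S \<and> S \<noteq> {})" shows "Max S = the None"
proof (cases "finite S")
  case True
  then have "S = {}" using assms by auto
  then show ?thesis by (simp add: Max.eq_fold')
next
  case False
  then show ?thesis by (rule Max.infinite)
qed

theorem lemmaS4:
  fixes \<sigma>2 \<phi> \<nu> \<tau>2 h :: real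
  assumes "\<sigma>2 > 0" and "\<phi> > 0" and "\<nu> > 0" and "h > 0" and "\<tau>2 \<ge> 0"
  shows "\<exists>\<Psi>high :: real. \<forall>n :: nat. \<forall>s :: nat \<Rightarrow> real^2.
           n \<ge> 1 \<longrightarrow>
           (\<forall>i<n. \<forall>j<n. i \<noteq> j \<longrightarrow> norm (s i - s j) \<ge> h) \<longrightarrow>
           Max {k. eigenvalue (matern_Sigma \<sigma>2 \<phi> \<nu> \<tau>2 n s) k} \<le> \<Psi>high"
proof -
  define b where "b = sqrt 2 * \<phi> / 2"
  have b: "b > 0" unfolding b_def using assms by simp
  define B where "B = 2 powr (1 - \<nu>) * \<sigma>2 / Gamma \<nu> * besselK \<nu> (sqrt 2 * \<phi> * h)
        * exp (sqrt 2 * \<phi> * h) * (2*\<nu>) powr \<nu>"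
  define Pk where "Pk = exp (b*(h/2)) * ((1 + exp (-(b*(h/2)/2))) / (1 - exp (-(b*(h/2)/2))))^2"
  define R where "R = \<sigma>2 + \<tau>2 + B * Pk"
  have mb: "0 \<le> matern \<sigma>2 \<phi> \<nu> d \<and> matern \<sigma>2 \<phi> \<nu> d \<le> B * exp (- b * d)" if "d \<ge> h" for d
    using matern_bound[OF assms(1-4) that] unfolding B_def b_def by simp
  have "0 \<le> B * exp (- b * h)" using mb[of h] by auto
  then have B0: "B \<ge> 0" by (simp add: zero_le_mult_iff)
  have main: "k \<le> R" if sep: "\<forall>i<n. \<forall>j<n. i \<noteq> j \<longrightarrow> norm (s i - s j) \<ge> h"
    and ev: "eigenvalue (matern_Sigma \<sigma>2 \<phi> \<nu> \<tau>2 n s) k" for n s k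
  proof (rule eig_rowsum[OF _ ev])
    show "matern_Sigma \<sigma>2 \<phi> \<nu> \<tau>2 n s \<in> carrier_mat n n" unfolding matern_Sigma_def by simp
    fix i assume i: "i < n"
    define J where "J = {j. j<n \<and> j\<noteq>i}"
    have un: "{..<n} = insert i J" using i unfolding J_def by auto
    have fJ: "finite J" "i \<notin> J" unfolding J_def by auto
    have "(\<Sum>j<n. \<bar>matern_Sigma \<sigma>2 \<phi> \<nu> \<tau>2 n s $$ (i,j)\<bar>)
        = \<bar>\<sigma>2 + \<tau>2\<bar> + (\<Sum>j\<in>J. \<bar>matern \<sigma>2 \<phi> \<nu> (norm (s i - s j))\<bar>)"
      unfolding un using fJ i by (simp add: matern_Sigma_def matern_def J_def)
    also have "\<dots> \<le> \<sigma>2 + \<tau>2 + (\<Sum>j\<in>J. B * exp (- b * norm (s i - s j)))"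
    proof -
      have "\<bar>matern \<sigma>2 \<phi> \<nu> (norm (s i - s j))\<bar> \<le> B * exp (- b * norm (s i - s j))" if "j \<in> J" for j
      proof -
        have "norm (s i - s j) \<ge> h" using sep that i unfolding J_def by auto
        then show ?thesis using mb by auto
      qed
      then show ?thesis using assms by (simp add: sum_mono)
    qed
    also have "\<dots> \<le> \<sigma>2 + \<tau>2 + B * Pk"
      using packing[OF assms(4) b i sep] B0 unfolding Pk_def J_def
      by (simp add: sum_distrib_left[symmetric] mult_left_mono)
    finally show "(\<Sum>j<n. \<bar>matern_Sigma \<sigma>2 \<phi> \<nu> \<tau>2 n s $$ (i,j)\<bar>) \<le> R" unfolding R_def .
  qed
  show ?thesis
  proof (intro exI[of _ "max R (the None)"] allI impI)
    fix n :: nat and s :: "nat \<Rightarrow> real^2"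
    assume sep: "\<forall>i<n. \<forall>j<n. i \<noteq> j \<longrightarrow> norm (s i - s j) \<ge> h"
    let ?S = "{k. eigenvalue (matern_Sigma \<sigma>2 \<phi> \<nu> \<tau>2 n s) k}"
    show "Max ?S \<le> max R (the None)"
    proof (cases "finite ?S \<and> ?S \<noteq> {}")
      case True
      then have "Max ?S \<in> ?S" by (intro Max_in) auto
      then have "Max ?S \<le> R" using main[OF sep] by auto
      then show ?thesis by simp
    next
      case False
      then show ?thesis using Max_bad[OF False] by simp
    qed
  qed
qed


end
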